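(* Let $\Sigma$ be a finite alphabet with at least two letters. The automatic topology on $T_\Sigma^\omega$, i.e. the topology generated by the regular tree languages that are closed for the Cantor topology on $T_\Sigma^\omega$, is Polish.
   Context: $T_\Sigma^\omega$ is the set of maps $\{l,r\}^*\to\Sigma$ with the Cantor topology (distance $2^{-n}$, $n$ the least length of a node where two trees differ). A regular tree language is one accepted by a Muller tree automaton $(\Sigma,Q,q_0,\Delta,\mathcal{F})$ with $\Delta\subseteq Q\times\Sigma\times Q\times Q$, $\mathcal{F}\subseteq 2^Q$: a run $\rho:\{l,r\}^*\to Q$ satisfies $\rho(\text{root})=q_0$ and $(\rho(u),t(u),\rho(ul),\rho(ur))\in\Delta$, and is accepting if for each infinite branch the set of states occurring infinitely often on it is in $\mathcal{F}$. *)

theory Defs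
  imports "HOL-Analysis.Analysis"
begin

text \<open>Infinite binary trees over alphabet 'a: maps from nodes (words over {l,r},
  encoded as bool lists, False = l, True = r) to letters.\<close>
type_synonym 'a tree = "bool list \<Rightarrow> 'a"

text \<open>Closedness in the Cantor topology (distance 2^-n, n the least length of a node
  where two trees differ): a limit of trees from L, i.e. a tree all of whose finite
  truncations are matched by trees in L, belongs to L.\<close>
definition cantor_closed :: "'a tree set \<Rightarrow> bool" where
  "cantor_closed L \<longleftrightarrow>
     (\<forall>t. (\<forall>n. \<exists>s\<in>L. \<forall>u. length u < n \<longrightarrow> s u = t u) \<longrightarrow> t \<in> L)"

record 'a muller_tree_automaton =
  states :: "nat set"
  init :: nat
  trans :: "(nat \<times> 'a \<times> nat \<times> nat) set"
  table :: "nat set set"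

definition wf_mta :: "'a muller_tree_automaton \<Rightarrow> bool" where
  "wf_mta A \<longleftrightarrow> finite (states A) \<and> init A \<in> states A \<and>
     trans A \<subseteq> states A \<times> UNIV \<times> states A \<times> states A \<and>
     table A \<subseteq> Pow (states A)"

definition is_run :: "'a muller_tree_automaton \<Rightarrow> 'a tree \<Rightarrow> (bool list \<Rightarrow> nat) \<Rightarrow> bool" where
  "is_run A t \<rho> \<longleftrightarrow> \<rho> [] = init A \<and>
     (\<forall>u. (\<rho> u, t u, \<rho> (u @ [False]), \<rho> (u @ [True])) \<in> trans A)"

text \<open>An infinite branch is given by a direction sequence pi; its n-th node is the
  prefix of length n.\<close>
definition inf_states :: "(bool list \<Rightarrow> nat) \<Rightarrow> (nat \<Rightarrow> bool) \<Rightarrow> nat set" where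
  "inf_states \<rho> \<pi> = {q. \<exists>\<^sub>\<infinity>n. \<rho> (map \<pi> [0..<n]) = q}"

definition accepting_run :: "'a muller_tree_automaton \<Rightarrow> (bool list \<Rightarrow> nat) \<Rightarrow> bool" where
  "accepting_run A \<rho> \<longleftrightarrow> (\<forall>\<pi>. inf_states \<rho> \<pi> \<in> table A)"

definition tree_lang :: "'a muller_tree_automaton \<Rightarrow> 'a tree set" where
  "tree_lang A = {t. \<exists>\<rho>. is_run A t \<rho> \<and> accepting_run A \<rho>}"

definition regular_tree_language :: "'a tree set \<Rightarrow> bool" where
  "regular_tree_language L \<longleftrightarrow> (\<exists>A. wf_mta A \<and> L = tree_lang A)"

definition automatic_topology :: "'a tree topology" where
  "automatic_topology =
     topology_generated_by {L. regular_tree_language L \<and> cantor_closed L}"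

definition Polish_space :: "'b topology \<Rightarrow> bool" where
  "Polish_space X \<longleftrightarrow> completely_metrizable_space X \<and> separable_space X"

end

theory Submission
  imports Defs
begin



definition cyl :: "bool list \<Rightarrow> 'a \<Rightarrow> 'a tree set" where
  "cyl u a = {t. t u = a}"

definition cyl_aut :: "bool list \<Rightarrow> 'a \<Rightarrow> 'a muller_tree_automaton" where
  "cyl_aut u a = \<lparr>states = {0..Suc (length u)}, init = 1,
     trans = {(0,b,0,0) | b. True} \<union>
       {(Suc k, b, if u!k then 0 else Suc (Suc k), if u!k then Suc (Suc k) else 0) | k b. k < length u}
       \<union> {(Suc (length u), a, 0, 0)},
     table = {{0}}\<rparr>"

lemma cyl_aut_wf: "wf_mta (cyl_aut u a)"
  unfolding wf_mta_def cyl_aut_def by auto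

lemma prefix_snoc_take:
  assumes "take (length v) u = v" "length v < length u"
  shows "(take (length (v @ [c])) u = v @ [c]) \<longleftrightarrow> u ! length v = c"
proof -
  have "take (Suc (length v)) u = take (length v) u @ [u ! length v]"
    using assms(2) by (simp add: take_Suc_conv_app_nth)
  then show ?thesis using assms(1) by auto
qed

lemma trans0: "(0,b,0,0) \<in> trans (cyl_aut u a)"
  unfolding cyl_aut_def by simp

lemma transk: assumes "k < length u" shows
  "(Suc k, b, if u!k then 0 else Suc (Suc k), if u!k then Suc (Suc k) else 0) \<in> trans (cyl_aut u a)"
proof -
  have "(Suc k, b, if u!k then 0 else Suc (Suc k), if u!k then Suc (Suc k) else 0) \<in>
     {(Suc k, b, if u!k then 0 else Suc (Suc k), if u!k then Suc (Suc k) else 0) | k b. k < length u}"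
    by (rule CollectI, rule exI[of _ k], rule exI[of _ b]) (simp add: assms)
  then show ?thesis unfolding cyl_aut_def by simp
qed

lemma transu: "(Suc (length u), a, 0, 0) \<in> trans (cyl_aut u a)"
  unfolding cyl_aut_def by simp

lemma cyl_sub: "cyl u a \<subseteq> tree_lang (cyl_aut u a)"
proof
  fix t assume t: "t \<in> cyl u a"
  define \<rho> where "\<rho> v = (if take (length v) u = v then Suc (length v) else 0)" for v
  have run: "is_run (cyl_aut u a) t \<rho>"
    unfolding is_run_def
  proof (intro conjI allI)
    show "\<rho> [] = init (cyl_aut u a)" by (simp add: \<rho>_def cyl_aut_def)
    fix v
    show "(\<rho> v, t v, \<rho> (v @ [False]), \<rho> (v @ [True])) \<in> trans (cyl_aut u a)"
    proof (cases "take (length v) u = v")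
      case True
      show ?thesis
      proof (cases "length v < length u")
        case lt: True
        have f: "\<rho> (v @ [False]) = (if u ! length v then 0 else Suc (Suc (length v)))"
          using prefix_snoc_take[OF True lt, of False] by (auto simp: \<rho>_def)
        have g: "\<rho> (v @ [True]) = (if u ! length v then Suc (Suc (length v)) else 0)"
          using prefix_snoc_take[OF True lt, of True] by (auto simp: \<rho>_def)
        have "\<rho> v = Suc (length v)" using True by (simp add: \<rho>_def)
        then show ?thesis unfolding f g using transk[OF lt, of "t v" a] by (cases "u ! length v") simp_all
      next
        case False
        then have "v = u" using True take_all[of u "length v"] by simp
        moreover have "\<rho> (u @ [c]) = 0" for c by (simp add: \<rho>_def)
        moreover have "\<rho> u = Suc (length u)" by (simp add: \<rho>_def)
        ultimately show ?thesis using t transu by (simp add: cyl_def)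
      qed
    next
      case False
      have "take (length (v @ [c])) u \<noteq> v @ [c]" for c
      proof
        assume H: "take (length (v @ [c])) u = v @ [c]"
        have "take (length v) (take (length (v @ [c])) u) = take (length v) (v @ [c])"
          by (simp only: H)
        then have "take (length v) u = v" by (simp add: min_def)
        with False show False by simp
      qed
      then have "\<rho> (v @ [c]) = 0" for c by (simp add: \<rho>_def)
      moreover have "\<rho> v = 0" using False by (simp add: \<rho>_def)
      ultimately show ?thesis using trans0 by simp
    qed
  qed
  have acc: "accepting_run (cyl_aut u a) \<rho>"
    unfolding accepting_run_def
  proof
    fix \<pi> :: "nat \<Rightarrow> bool"
    have big: "\<rho> (map \<pi> [0..<n]) = 0" if "n > length u" for n
      using that by (auto simp: \<rho>_def)
    have "inf_states \<rho> \<pi> = {0}"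
    proof -
      have "q \<in> inf_states \<rho> \<pi> \<longleftrightarrow> q = 0" for q
      proof
        assume "q \<in> inf_states \<rho> \<pi>"
        then have "\<forall>m. \<exists>n>m. \<rho> (map \<pi> [0..<n]) = q"
          unfolding inf_states_def INFM_nat by simp
        then obtain n where "n > length u" "\<rho> (map \<pi> [0..<n]) = q"
          by (elim allE[of _ "length u"] exE conjE)
        then show "q = 0" using big by auto
      next
        assume "q = 0"
        then show "q \<in> inf_states \<rho> \<pi>"
          unfolding inf_states_def INFM_nat mem_Collect_eq
        proof (intro allI)
          fix m
          have "Suc (max m (length u)) > m" "Suc (max m (length u)) > length u" by auto
          then show "\<exists>n>m. \<rho> (map \<pi> [0..<n]) = q" using big \<open>q = 0\<close> by blast
        qed
      qed
      then show ?thesis by auto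
    qed
    then show "inf_states \<rho> \<pi> \<in> table (cyl_aut u a)" by (simp add: cyl_aut_def)
  qed
  show "t \<in> tree_lang (cyl_aut u a)" unfolding tree_lang_def using run acc by blast
qed

lemma cyl_sup: "tree_lang (cyl_aut u a) \<subseteq> cyl u a"
proof
  fix t assume "t \<in> tree_lang (cyl_aut u a)"
  then obtain \<rho> where r: "is_run (cyl_aut u a) t \<rho>" unfolding tree_lang_def by blast
  have tr: "\<And>v. (\<rho> v, t v, \<rho> (v @ [False]), \<rho> (v @ [True])) \<in> trans (cyl_aut u a)"
    and r0: "\<rho> [] = 1" using r unfolding is_run_def by (auto simp: cyl_aut_def)
  have "k \<le> length u \<Longrightarrow> \<rho> (take k u) = Suc k" for k
  proof (induction k)
    case 0 then show ?case using r0 by simp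
  next
    case (Suc k)
    then have k: "k < length u" by simp
    have eq: "take (Suc k) u = take k u @ [u ! k]" using k by (simp add: take_Suc_conv_app_nth)
    have "(Suc k, t (take k u), \<rho> (take k u @ [False]), \<rho> (take k u @ [True])) \<in> trans (cyl_aut u a)"
      using tr[of "take k u"] Suc k by simp
    then have "\<rho> (take k u @ [False]) = (if u!k then 0 else Suc (Suc k)) \<and>
               \<rho> (take k u @ [True]) = (if u!k then Suc (Suc k) else 0)"
      using k by (auto simp: cyl_aut_def)
    then show ?case unfolding eq by (cases "u ! k") auto
  qed
  from this[of "length u"] have "\<rho> u = Suc (length u)" by simp
  with tr[of u] show "t \<in> cyl u a" by (auto simp: cyl_aut_def cyl_def)
qed

lemma cyl_regular: "regular_tree_language (cyl u a)"
  unfolding regular_tree_language_def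
proof (intro exI conjI)
  show "wf_mta (cyl_aut u a)" by (rule cyl_aut_wf)
  show "cyl u a = tree_lang (cyl_aut u a)" using cyl_sub cyl_sup by (rule equalityI)
qed

lemma cyl_closed: "cantor_closed (cyl u a)"
  unfolding cantor_closed_def
proof (intro allI impI)
  fix t :: "'a tree" assume H: "\<forall>n. \<exists>s\<in>cyl u a. \<forall>v. length v < n \<longrightarrow> s v = t v"
  from H[rule_format, of "Suc (length u)"] obtain s where s: "s \<in> cyl u a"
    and e: "\<forall>v. length v < Suc (length u) \<longrightarrow> s v = t v" by (elim bexE)
  have "s u = t u" using e by simp
  then show "t \<in> cyl u a" using s by (simp add: cyl_def)
qed



lemma countable_wf: "countable {A :: ('a::finite) muller_tree_automaton. wf_mta A}"
proof -
  define mk :: "nat set \<times> nat \<times> (nat \<times> 'a \<times> nat \<times> nat) set \<times> nat set set \<Rightarrow> 'a muller_tree_automaton"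
    where "mk = (\<lambda>(s,i,tr,tb). \<lparr>states = s, init = i, trans = tr, table = tb\<rparr>)"
  define D where "D = {s::nat set. finite s} \<times> (UNIV::nat set) \<times>
     {tr :: (nat \<times> 'a \<times> nat \<times> nat) set. finite tr} \<times> {tb. finite tb \<and> tb \<subseteq> {x::nat set. finite x}}"
  have cD: "countable D" unfolding D_def
    by (intro countable_SIGMA countable_Collect_finite countableI_type
        countable_Collect_finite_subset)
  have "{A. wf_mta A} \<subseteq> mk ` D"
  proof
    fix A :: "'a muller_tree_automaton" assume "A \<in> {A. wf_mta A}"
    then have w: "wf_mta A" by simp
    have fs: "finite (states A)" using w by (simp add: wf_mta_def)
    have "trans A \<subseteq> states A \<times> UNIV \<times> states A \<times> states A" using w by (simp add: wf_mta_def)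
    moreover have "finite (states A \<times> (UNIV::'a set) \<times> states A \<times> states A)" using fs by simp
    ultimately have ft: "finite (trans A)" by (rule finite_subset)
    have tb: "table A \<subseteq> Pow (states A)" using w by (simp add: wf_mta_def)
    then have "finite (table A)" using fs by (simp add: finite_subset)
    moreover have "table A \<subseteq> {x. finite x}" using tb fs by (auto intro: finite_subset)
    ultimately have "(states A, init A, trans A, table A) \<in> D" using fs ft by (simp add: D_def)
    moreover have "A = mk (states A, init A, trans A, table A)" by (cases A) (simp add: mk_def)
    ultimately show "A \<in> mk ` D" by blast
  qed
  then show ?thesis using cD by (blast intro: countable_subset countable_image)
qed

definition SS :: "('a::finite) tree set set" where
  "SS = {L. regular_tree_language L \<and> cantor_closed L}"

lemma countable_SS: "countable SS"
proof -
  have "SS \<subseteq> tree_lang ` {A. wf_mta A}" unfolding SS_def regular_tree_language_def by blast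
  then show ?thesis using countable_wf by (blast intro: countable_subset countable_image)
qed

lemma cyl_SS: "cyl u a \<in> SS"
  by (simp add: SS_def cyl_regular cyl_closed)

definition nbhd :: "'a tree \<Rightarrow> nat \<Rightarrow> 'a tree set" where
  "nbhd t m = {s. \<forall>u. length u < m \<longrightarrow> s u = t u}"

lemma nbhd_open:
  assumes c: "\<And>u a. openin Z (cyl u a)" and tZ: "topspace Z = UNIV"
  shows "openin Z (nbhd t m)"
proof (cases "m = 0")
  case True
  then have "nbhd t m = topspace Z" using tZ by (simp add: nbhd_def)
  then show ?thesis by simp
next
  case False
  have eq: "nbhd t m = \<Inter> ((\<lambda>u. cyl u (t u)) ` {u. length u < m})"
    by (auto simp: nbhd_def cyl_def)
  have "{u::bool list. length u < m} \<subseteq> {xs. set xs \<subseteq> UNIV \<and> length xs \<le> m}" by auto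
  then have fin: "finite {u::bool list. length u < m}"
    by (rule finite_subset) (rule finite_lists_length_le, simp)
  have ne: "[] \<in> {u::bool list. length u < m}" using False by simp
  show ?thesis unfolding eq
  proof (rule openin_Inter)
    show "finite ((\<lambda>u. cyl u (t u)) ` {u. length u < m})" using fin by simp
    show "(\<lambda>u. cyl u (t u)) ` {u. length u < m} \<noteq> {}" using ne by blast
  qed (auto simp: c)
qed

lemma compl_open:
  assumes L: "cantor_closed L" and c: "\<And>u a. openin Z (cyl u a)" and tZ: "topspace Z = UNIV"
  shows "openin Z (- L)"
proof (subst openin_subopen, intro ballI)
  fix t assume "t \<in> - L"
  then have "t \<notin> L" by simp
  with L obtain m where m: "\<not> (\<exists>s\<in>L. \<forall>u. length u < m \<longrightarrow> s u = t u)"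
    unfolding cantor_closed_def by blast
  have "nbhd t m \<subseteq> - L" using m by (auto simp: nbhd_def)
  moreover have "t \<in> nbhd t m" by (simp add: nbhd_def)
  ultimately show "\<exists>T. openin Z T \<and> t \<in> T \<and> T \<subseteq> - L"
    using nbhd_open[OF c tZ] by blast
qed

lemma cont_discrete:
  assumes "\<And>y. openin X {x \<in> topspace X. f x = y}"
  shows "continuous_map X (discrete_topology (UNIV :: 'b set)) (f :: 'a \<Rightarrow> 'b)"
  unfolding continuous_map_def
proof (intro conjI allI impI)
  show "f \<in> topspace X \<rightarrow> topspace (discrete_topology UNIV)" by simp
  fix V :: "'b set" assume "openin (discrete_topology UNIV) V"
  have "{x \<in> topspace X. f x \<in> V} = \<Union> ((\<lambda>y. {x \<in> topspace X. f x = y}) ` V)" by auto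
  then show "openin X {x \<in> topspace X. f x \<in> V}"
    using assms by (auto intro!: openin_Union)
qed

definition Y1 :: "('a::finite) tree topology" where
  "Y1 = product_topology (\<lambda>_. discrete_topology UNIV) UNIV"

definition Y2 :: "(nat \<Rightarrow> bool) topology" where
  "Y2 = product_topology (\<lambda>_. discrete_topology UNIV) UNIV"

lemma topspace_Y1: "topspace Y1 = UNIV"
  by (auto simp: Y1_def PiE_UNIV_domain)

lemma topspace_Y2: "topspace Y2 = UNIV"
  by (auto simp: Y2_def PiE_UNIV_domain)

lemma cyl_open_Y1: "openin Y1 (cyl u a)"
proof -
  have "openin Y1 {x \<in> topspace Y1. x u \<in> {a}}"
    unfolding Y1_def
    by (rule openin_continuous_map_preimage[OF continuous_map_product_projection]) auto
  moreover have "{x \<in> topspace Y1. x u \<in> {a}} = cyl u a" by (auto simp: topspace_Y1 cyl_def)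
  ultimately show ?thesis by simp
qed

lemma cm_Y1: "completely_metrizable_space Y1"
  unfolding Y1_def completely_metrizable_space_product_topology
  by (simp add: completely_metrizable_space_discrete_topology)

lemma cm_Y2: "completely_metrizable_space Y2"
  unfolding Y2_def completely_metrizable_space_product_topology
  by (simp add: completely_metrizable_space_discrete_topology)



lemma auto_eq: "automatic_topology = topology_generated_by SS"
  by (simp add: automatic_topology_def SS_def)

lemma topspace_auto: "topspace (topology_generated_by (SS :: ('a::finite) tree set set)) = UNIV"
proof -
  have "t \<in> \<Union>SS" for t :: "'a tree"
    using cyl_SS[of "[]" "t []"] by (auto simp: cyl_def)
  then show ?thesis by auto
qed

lemma SS_open: "L \<in> SS \<Longrightarrow> openin (topology_generated_by SS) L"
  by (simp add: openin_topology_generated_by_iff generate_topology_on.Basis)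

lemma SS_closed_open:
  assumes "L \<in> SS" shows "openin (topology_generated_by (SS :: ('a::finite) tree set set)) (- L)"
proof (rule compl_open)
  show "cantor_closed L" using assms by (simp add: SS_def)
  show "openin (topology_generated_by SS) (cyl u a)" for u a by (rule SS_open[OF cyl_SS])
  show "topspace (topology_generated_by (SS :: ('a::finite) tree set set)) = UNIV" by (rule topspace_auto)
qed

lemma SS_closed_open_Y1:
  assumes "L \<in> SS" shows "openin Y1 (- L)"
proof (rule compl_open)
  show "cantor_closed L" using assms by (simp add: SS_def)
  show "openin Y1 (cyl u a)" for u a by (rule cyl_open_Y1)
  show "topspace Y1 = UNIV" by (rule topspace_Y1)
qed

definition good :: "'a set set \<Rightarrow> 'a set \<Rightarrow> 'a \<Rightarrow> 'a set set \<Rightarrow> bool" where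
  "good S U x F \<longleftrightarrow> finite F \<and> F \<subseteq> S \<and> F \<noteq> {} \<and> x \<in> \<Inter>F \<and> \<Inter>F \<subseteq> U"

lemma gen_base:
  assumes "generate_topology_on S U"
  shows "\<forall>x\<in>U. \<exists>F. good S U x F"
  using assms
proof (induction rule: generate_topology_on.induct)
  case Empty then show ?case by simp
next
  case (Int a b)
  show ?case
  proof
    fix x assume x: "x \<in> a \<inter> b"
    have "\<exists>F. good S a x F" using Int.IH(1) IntD1[OF x] by (rule bspec)
    then obtain F1 where F1: "good S a x F1" by (rule exE)
    have "\<exists>F. good S b x F" using Int.IH(2) IntD2[OF x] by (rule bspec)
    then obtain F2 where F2: "good S b x F2" by (rule exE)
    have "good S (a \<inter> b) x (F1 \<union> F2)" using F1 F2 unfolding good_def by auto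
    then show "\<exists>F. good S (a \<inter> b) x F" by (rule exI)
  qed
next
  case (UN K)
  show ?case
  proof
    fix x assume "x \<in> \<Union>K"
    then obtain k where k: "k \<in> K" "x \<in> k" by (rule UnionE)
    have "\<exists>F. good S k x F" using UN.IH[OF k(1)] k(2) by (rule bspec)
    then obtain F where F: "good S k x F" by (rule exE)
    have "good S (\<Union>K) x F" using F k(1) unfolding good_def by auto
    then show "\<exists>F. good S (\<Union>K) x F" by (rule exI)
  qed
next
  case (Basis s)
  show ?case
  proof
    fix x assume "x \<in> s"
    then have "good S s x {s}" using Basis unfolding good_def by auto
    then show "\<exists>F. good S s x F" by (rule exI)
  qed
qed

lemma second_countable_gen:
  assumes "countable S"
  shows "second_countable (topology_generated_by S)"
proof -
  define B where "B = Inter ` {F. finite F \<and> F \<subseteq> S \<and> F \<noteq> {}}"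
  have c: "countable B" unfolding B_def
    by (rule countable_image, rule countable_subset[OF _ countable_Collect_finite_subset[OF assms]]) blast
  have o: "\<forall>V\<in>B. openin (topology_generated_by S) V"
  proof
    fix V assume "V \<in> B"
    then obtain F where F: "finite F" "F \<subseteq> S" "F \<noteq> {}" "V = \<Inter>F" unfolding B_def by blast
    show "openin (topology_generated_by S) V"
      unfolding F(4)
    proof (rule openin_Inter[OF F(1) F(3)])
      fix X assume "X \<in> F"
      then have "X \<in> S" using F(2) by blast
      then show "openin (topology_generated_by S) X"
        by (simp add: openin_topology_generated_by_iff generate_topology_on.Basis)
    qed
  qed
  have b: "\<forall>U x. openin (topology_generated_by S) U \<and> x \<in> U \<longrightarrow> (\<exists>V\<in>B. x \<in> V \<and> V \<subseteq> U)"
  proof (intro allI impI)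
    fix U x assume H: "openin (topology_generated_by S) U \<and> x \<in> U"
    then have g: "generate_topology_on S U" by (simp add: openin_topology_generated_by_iff)
    have ex: "\<exists>F. good S U x F"
      using gen_base[OF g] conjunct2[OF H] by (rule bspec)
    then obtain F where F0: "good S U x F"
      by (rule exE)
    then have F: "finite F \<and> F \<subseteq> S \<and> F \<noteq> {} \<and> x \<in> \<Inter>F \<and> \<Inter>F \<subseteq> U"
      unfolding good_def by assumption
    have "F \<in> {F. finite F \<and> F \<subseteq> S \<and> F \<noteq> {}}" using F by (elim conjE) (intro CollectI conjI)
    then have "\<Inter>F \<in> B" unfolding B_def by (rule imageI)
    then show "\<exists>V\<in>B. x \<in> V \<and> V \<subseteq> U" using F by (intro bexI[of _ "\<Inter>F"]) simp_all
  qed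
  show ?thesis unfolding second_countable_def
    by (rule exI[of _ B], intro conjI c o b)
qed



theorem main:
  shows "Polish_space (automatic_topology :: ('a::finite) tree topology)"
proof -
  let ?X = "topology_generated_by (SS :: 'a tree set set)"
  define e where "e = from_nat_into (SS :: 'a tree set set)"
  have SSne: "(SS :: 'a tree set set) \<noteq> {}" using cyl_SS by blast
  have re: "range e = SS" unfolding e_def by (rule range_from_nat_into[OF SSne countable_SS])
  have eSS: "e n \<in> SS" for n using re by blast
  define \<phi> where "\<phi> t = (t, \<lambda>n. t \<in> e n)" for t :: "'a tree"
  let ?Y = "prod_topology Y1 Y2"
  let ?R = "range \<phi>"
  have tY: "topspace ?Y = UNIV" by (simp add: topspace_Y1 topspace_Y2)
  have cmY: "completely_metrizable_space ?Y"
    by (simp add: completely_metrizable_space_prod_topology cm_Y1 cm_Y2)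
  have snd_cont: "continuous_map ?Y (discrete_topology UNIV) (\<lambda>p. snd p n)" for n
  proof -
    have "continuous_map ?Y (discrete_topology UNIV) ((\<lambda>x. x n) \<circ> snd)"
      by (rule continuous_map_compose[OF continuous_map_snd]) (unfold Y2_def, rule continuous_map_product_projection, simp)
    then show ?thesis by (simp add: o_def)
  qed
  have snd_open: "openin ?Y {p. snd p n}" for n
  proof -
    have "openin ?Y {p \<in> topspace ?Y. snd p n \<in> {True}}"
      by (rule openin_continuous_map_preimage[OF snd_cont]) simp
    then show ?thesis by (simp add: tY topspace_Y1 topspace_Y2)
  qed
  have fst_open: "openin ?Y {p. fst p \<in> - e n}" for n
  proof -
    have "openin ?Y {p \<in> topspace ?Y. fst p \<in> - e n}"
      by (rule openin_continuous_map_preimage[OF continuous_map_fst SS_closed_open_Y1[OF eSS]])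
    then show ?thesis by (simp add: tY topspace_Y1 topspace_Y2)
  qed
  have Req: "?R = \<Inter> (range (\<lambda>n. {p. snd p n \<or> fst p \<notin> e n} \<inter> {p. \<not> snd p n \<or> fst p \<in> e n}))"
  proof (intro equalityI subsetI)
    fix p assume "p \<in> ?R" then show "p \<in> \<Inter> (range (\<lambda>n. {p. snd p n \<or> fst p \<notin> e n} \<inter> {p. \<not> snd p n \<or> fst p \<in> e n}))"
      by (auto simp: \<phi>_def)
  next
    fix p assume "p \<in> \<Inter> (range (\<lambda>n. {p. snd p n \<or> fst p \<notin> e n} \<inter> {p. \<not> snd p n \<or> fst p \<in> e n}))"
    then have "snd p = (\<lambda>n. fst p \<in> e n)" by auto
    then have "p = \<phi> (fst p)" by (simp add: \<phi>_def prod_eq_iff)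
    then show "p \<in> ?R" by blast
  qed
  have gd: "gdelta_in ?Y ?R"
    unfolding Req
  proof (rule gdelta_in_Inter, simp, simp, clarify)
    fix n
    have o: "openin ?Y ({p. snd p n} \<union> {p. fst p \<in> - e n})"
      using snd_open fst_open by (rule openin_Un)
    have "{p. snd p n} \<union> {p. fst p \<in> - e n} = {p. snd p n \<or> fst p \<notin> e n}" by auto
    with o have g1: "gdelta_in ?Y {p. snd p n \<or> fst p \<notin> e n}" by (simp add: open_imp_gdelta_in)
    have o2: "openin ?Y ({p. snd p n} \<inter> {p. fst p \<in> - e n})"
      using snd_open fst_open by (rule openin_Int)
    have "topspace ?Y - {p. \<not> snd p n \<or> fst p \<in> e n} = {p. snd p n} \<inter> {p. fst p \<in> - e n}"
      by (auto simp: tY topspace_Y1 topspace_Y2)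
    with o2 have "closedin ?Y {p. \<not> snd p n \<or> fst p \<in> e n}" by (simp add: closedin_def tY topspace_Y1 topspace_Y2)
    then have g2: "gdelta_in ?Y {p. \<not> snd p n \<or> fst p \<in> e n}"
      by (intro closed_imp_gdelta_in completely_metrizable_imp_metrizable_space cmY)
    show "gdelta_in ?Y ({p. snd p n \<or> fst p \<notin> e n} \<inter> {p. \<not> snd p n \<or> fst p \<in> e n})"
      using g1 g2 by (rule gdelta_in_Int)
  qed
  have cmR: "completely_metrizable_space (subtopology ?Y ?R)"
    using cmY gd by (rule completely_metrizable_space_gdelta_in)
  have tX: "topspace ?X = UNIV" by (rule topspace_auto)
  have USS: "\<Union>(SS::'a tree set set) = UNIV" using tX by simp
  have c1: "continuous_map ?X Y1 (\<lambda>t. t)"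
    unfolding Y1_def continuous_map_componentwise_UNIV
  proof
    fix u
    show "continuous_map ?X (discrete_topology UNIV) (\<lambda>t. t u)"
    proof (rule cont_discrete)
      fix a
      have "{x \<in> topspace ?X. x u = a} = cyl u a" by (auto simp: tX USS cyl_def)
      then show "openin ?X {x \<in> topspace ?X. x u = a}" using SS_open[OF cyl_SS] by simp
    qed
  qed
  have c2: "continuous_map ?X Y2 (\<lambda>t n. t \<in> e n)"
    unfolding Y2_def continuous_map_componentwise_UNIV
  proof
    fix n
    show "continuous_map ?X (discrete_topology UNIV) (\<lambda>t. t \<in> e n)"
    proof (rule cont_discrete)
      fix b
      show "openin ?X {x \<in> topspace ?X. (x \<in> e n) = b}"
      proof (cases b)
        case True
        then have "{x \<in> topspace ?X. (x \<in> e n) = b} = e n" by (auto simp: tX USS)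
        then show ?thesis using SS_open[OF eSS] by simp
      next
        case False
        then have "{x \<in> topspace ?X. (x \<in> e n) = b} = - e n" by (auto simp: tX USS)
        then show ?thesis using SS_closed_open[OF eSS] by simp
      qed
    qed
  qed
  have cphi: "continuous_map ?X (subtopology ?Y ?R) \<phi>"
  proof (rule continuous_map_into_subtopology)
    show "continuous_map ?X ?Y \<phi>"
      unfolding \<phi>_def continuous_map_paired using c1 c2 by simp
    show "\<phi> \<in> topspace ?X \<rightarrow> ?R" by auto
  qed
  have tR: "topspace (subtopology ?Y ?R) = ?R" by (simp add: tY topspace_Y1 topspace_Y2)
  have cfst: "continuous_map (subtopology ?Y ?R) ?X fst"
    unfolding continuous_on_generated_topo_iff
  proof (intro conjI allI impI)
    fix U :: "'a tree set" assume "U \<in> SS"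
    then obtain n where n: "U = e n" using re by blast
    have "fst -` U \<inter> topspace (subtopology ?Y ?R) = ?R \<inter> {p. snd p n}"
      by (auto simp: tR n \<phi>_def topspace_Y1 topspace_Y2)
    then show "openin (subtopology ?Y ?R) (fst -` U \<inter> topspace (subtopology ?Y ?R))"
      using openin_subtopology_Int2[OF snd_open] by simp
  next
    show "fst ` topspace (subtopology ?Y ?R) \<subseteq> \<Union> SS" using USS by simp
  qed
  have "homeomorphic_maps ?X (subtopology ?Y ?R) \<phi> fst"
    unfolding homeomorphic_maps_def using cphi cfst by (auto simp: \<phi>_def tR topspace_Y1 topspace_Y2)
  then have hom: "?X homeomorphic_space (subtopology ?Y ?R)"
    unfolding homeomorphic_space_def by blast
  have "completely_metrizable_space ?X"
    using homeomorphic_completely_metrizable_space[OF hom] cmR by simp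
  moreover have "separable_space ?X"
    by (rule second_countable_imp_separable_space, rule second_countable_gen, rule countable_SS)
  ultimately show ?thesis unfolding Polish_space_def auto_eq by simp
qed


theorem mainTheorem13:
  assumes "CARD('a::finite) \<ge> 2"
  shows "Polish_space (automatic_topology :: 'a tree topology)"
  by (rule main)

end
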